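(* Let $d\ge2$ and let $P$ be a $d$-dimensional exceptional simplex. Then $\mu^F(P)=d-\tfrac12$.
   Context: For a $d$-dimensional rational polytope $P\subseteq\mathbb{R}^d$ and $a\in(\mathbb{Z}^d)^*$ let $h_P(a)=\min_{x\in P}\langle a,x\rangle$. For $s>0$ the Fine adjoint polytope is $P^{F(s)}=\{x\in\mathbb{R}^d : \langle a,x\rangle\ge h_P(a)+s \text{ for all } a\in(\mathbb{Z}^d)^*\setminus\{0\}\}$. The Fine $\mathbb{Q}$-codegree is $\mu^F(P)=(\sup\{s>0 : P^{F(s)}\neq\emptyset\})^{-1}$. A $d$-dimensional lattice polytope $P$ is a lattice pyramid over a lattice polytope $P'\subseteq\mathbb{R}^{d-1}$ if $P$ is unimodularly equivalent to $\operatorname{conv}(P'\times\{1\},\{0\})\subseteq\mathbb{R}^{d-1}\times\mathbb{R}$. For $d\ge2$, a $d$-dimensional lattice polytope is an exceptional simplex if it is (up to unimodular equivalence) a $(d-2)$-fold iterated lattice pyramid over $2\Delta_2=\operatorname{conv}\{(0,0),(2,0),(0,2)\}$. *)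

theory Defs
  imports "HOL-Analysis.Analysis"
begin

text \<open>Points of R^d are represented as functions nat => real vanishing outside {0..<d};
  integer (dual) vectors of Z^d as functions nat => int vanishing outside {0..<d}.\<close>

definition inRd :: "nat \<Rightarrow> (nat \<Rightarrow> real) \<Rightarrow> bool" where
  "inRd d x \<longleftrightarrow> (\<forall>i\<ge>d. x i = 0)"

definition inZd :: "nat \<Rightarrow> (nat \<Rightarrow> int) \<Rightarrow> bool" where
  "inZd d a \<longleftrightarrow> (\<forall>i\<ge>d. a i = 0)"

definition pair :: "nat \<Rightarrow> (nat \<Rightarrow> int) \<Rightarrow> (nat \<Rightarrow> real) \<Rightarrow> real" where
  "pair d a x = (\<Sum>i<d. real_of_int (a i) * x i)"

definition fconv :: "(nat \<Rightarrow> real) set \<Rightarrow> (nat \<Rightarrow> real) set" where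
  "fconv S = {x. \<exists>F u. finite F \<and> F \<noteq> {} \<and> F \<subseteq> S \<and> (\<forall>y\<in>F. 0 \<le> u y) \<and>
      sum u F = 1 \<and> x = (\<lambda>i. \<Sum>y\<in>F. u y * y i)}"

definition hP :: "nat \<Rightarrow> (nat \<Rightarrow> real) set \<Rightarrow> (nat \<Rightarrow> int) \<Rightarrow> real" where
  "hP d P a = Inf ((\<lambda>x. pair d a x) ` P)"

definition fine_adjoint :: "nat \<Rightarrow> (nat \<Rightarrow> real) set \<Rightarrow> real \<Rightarrow> (nat \<Rightarrow> real) set" where
  "fine_adjoint d P s = {x. inRd d x \<and>
      (\<forall>a. inZd d a \<and> (\<exists>i<d. a i \<noteq> 0) \<longrightarrow> pair d a x \<ge> hP d P a + s)}"

definition fine_codegree :: "nat \<Rightarrow> (nat \<Rightarrow> real) set \<Rightarrow> real" where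
  "fine_codegree d P = inverse (Sup {s. s > 0 \<and> fine_adjoint d P s \<noteq> {}})"

text \<open>Unimodular (affine) equivalence: x |-> U x + t with U in GL_d(Z), t in Z^d.\<close>
definition unimod_map :: "nat \<Rightarrow> (nat \<Rightarrow> nat \<Rightarrow> int) \<Rightarrow> (nat \<Rightarrow> int) \<Rightarrow>
    (nat \<Rightarrow> real) \<Rightarrow> (nat \<Rightarrow> real)" where
  "unimod_map d U t x = (\<lambda>i. if i < d then (\<Sum>j<d. real_of_int (U i j) * x j) + real_of_int (t i) else 0)"

definition unimod_equiv :: "nat \<Rightarrow> (nat \<Rightarrow> real) set \<Rightarrow> (nat \<Rightarrow> real) set \<Rightarrow> bool" where
  "unimod_equiv d P Q \<longleftrightarrow> P \<subseteq> Collect (inRd d) \<and> Q \<subseteq> Collect (inRd d) \<and>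
     (\<exists>U V t. (\<forall>i<d. \<forall>k<d. (\<Sum>j<d. U i j * V j k) = (if i = k then 1 else 0)) \<and>
              Q = unimod_map d U t ` P)"

text \<open>Lattice pyramid over P' (in R^(d-1)): conv(P' x {1}, 0) in R^d, the new coordinate
  being coordinate d-1.\<close>
definition lattice_pyramid :: "nat \<Rightarrow> (nat \<Rightarrow> real) set \<Rightarrow> (nat \<Rightarrow> real) set" where
  "lattice_pyramid d P' = fconv ((\<lambda>x. x(d - 1 := 1)) ` P' \<union> {\<lambda>_. 0})"

definition two_Delta2 :: "(nat \<Rightarrow> real) set" where
  "two_Delta2 = fconv {\<lambda>_. 0, (\<lambda>i. if i = 0 then 2 else 0), (\<lambda>i. if i = 1 then 2 else 0)}"

text \<open>k-fold iterated lattice pyramid over 2 Delta_2 (a subset of R^(k+2)).\<close>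
fun iter_pyramid :: "nat \<Rightarrow> (nat \<Rightarrow> real) set" where
  "iter_pyramid 0 = two_Delta2"
| "iter_pyramid (Suc k) = lattice_pyramid (k + 3) (iter_pyramid k)"

definition exceptional_simplex :: "nat \<Rightarrow> (nat \<Rightarrow> real) set \<Rightarrow> bool" where
  "exceptional_simplex d P \<longleftrightarrow> 2 \<le> d \<and> unimod_equiv d P (iter_pyramid (d - 2))"

end

theory Submission
  imports Defs "Jordan_Normal_Form.Determinant"
begin

lemma VU_inv:
  fixes U V :: "nat \<Rightarrow> nat \<Rightarrow> int"
  assumes "\<forall>i<d. \<forall>k<d. (\<Sum>j<d. U i j * V j k) = (if i = k then 1 else 0)"
  shows "\<forall>i<d. \<forall>k<d. (\<Sum>j<d. V i j * U j k) = (if i = k then 1 else 0)"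
proof -
  define A :: "real mat" where "A = mat d d (\<lambda>(i,j). real_of_int (U i j))"
  define B :: "real mat" where "B = mat d d (\<lambda>(i,j). real_of_int (V i j))"
  have A: "A \<in> carrier_mat d d" and B: "B \<in> carrier_mat d d" by (auto simp: A_def B_def)
  have sum_eq: "{0..<d} = {..<d}" by auto
  have "A * B = 1\<^sub>m d"
  proof (rule eq_matI)
    fix i j assume ij: "i < dim_row (1\<^sub>m d)" "j < dim_col (1\<^sub>m d)"
    have "(A * B) $$ (i, j) = (\<Sum>k<d. real_of_int (U i k) * real_of_int (V k j))"
      using ij A B by (simp add: A_def B_def scalar_prod_def sum_eq)
    also have "\<dots> = real_of_int (\<Sum>k<d. U i k * V k j)" by simp
    also have "\<dots> = (if i = j then 1 else 0)" using assms ij by simp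
    finally show "(A * B) $$ (i, j) = 1\<^sub>m d $$ (i, j)" using ij by simp
  qed (auto simp: A_def B_def)
  then have BA: "B * A = 1\<^sub>m d" by (rule mat_mult_left_right_inverse[OF A B])
  show ?thesis
  proof (intro allI impI)
    fix i k assume ik: "i < d" "k < d"
    have "real_of_int (\<Sum>j<d. V i j * U j k) = (\<Sum>j<d. real_of_int (V i j) * real_of_int (U j k))" by simp
    also have "\<dots> = (B * A) $$ (i, k)"
      using ik A B by (simp add: A_def B_def scalar_prod_def sum_eq)
    also have "\<dots> = (if i = k then 1 else 0)" using BA ik by simp
    finally show "(\<Sum>j<d. V i j * U j k) = (if i = k then 1 else 0)"
      by (metis of_int_0 of_int_1 of_int_eq_iff)
  qed
qed

definition Lf :: "nat \<Rightarrow> (nat \<Rightarrow> real) \<Rightarrow> (nat \<Rightarrow> real) \<Rightarrow> real" where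
  "Lf n c y = (\<Sum>i<n. c i * y i)"

lemma fconv_bound:
  assumes "\<forall>v\<in>S. \<beta> \<le> Lf n c v" "y \<in> fconv S"
  shows "\<beta> \<le> Lf n c y"
proof -
  obtain F u where F: "finite F" "F \<noteq> {}" "F \<subseteq> S" "\<forall>y\<in>F. 0 \<le> u y" "sum u F = 1"
    and y: "y = (\<lambda>i. \<Sum>v\<in>F. u v * v i)"
    using assms(2) unfolding fconv_def by blast
  have "Lf n c y = (\<Sum>i<n. \<Sum>v\<in>F. c i * (u v * v i))"
    unfolding Lf_def y by (simp add: sum_distrib_left)
  also have "\<dots> = (\<Sum>v\<in>F. \<Sum>i<n. c i * (u v * v i))" by (rule sum.swap)
  also have "\<dots> = (\<Sum>v\<in>F. u v * Lf n c v)"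
    unfolding Lf_def by (simp add: sum_distrib_left mult_ac)
  also have "\<dots> \<ge> (\<Sum>v\<in>F. u v * \<beta>)"
    using F assms(1) by (intro sum_mono mult_left_mono) auto
  finally show ?thesis using F by (simp add: sum_distrib_right[symmetric])
qed

lemma in_fconv: "v \<in> S \<Longrightarrow> v \<in> fconv S"
  unfolding fconv_def
  by (rule CollectI, rule exI[of _ "{v}"], rule exI[of _ "\<lambda>_. 1"]) auto

definition cvec :: "nat \<Rightarrow> nat \<Rightarrow> nat \<Rightarrow> real" where
  "cvec k j = (\<lambda>i. if j \<le> i \<and> i < k + 2 then 1 else 0)"
definition pvec :: "nat \<Rightarrow> nat \<Rightarrow> real" where
  "pvec k = (\<lambda>i. if i = 0 then 2 else cvec k 2 i)"
definition qvec :: "nat \<Rightarrow> nat \<Rightarrow> real" where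
  "qvec k = (\<lambda>i. if i = 1 then 2 else cvec k 2 i)"
definition Wv :: "nat \<Rightarrow> (nat \<Rightarrow> real) set" where
  "Wv k = cvec k ` {2..k+2} \<union> {pvec k, qvec k}"

lemma finite_Wv: "finite (Wv k)" unfolding Wv_def by auto

lemma Wv_lift: assumes "w \<in> Wv k" shows "w(k+2 := 1) \<in> Wv (Suc k)"
proof -
  have c: "(cvec k j)(k+2 := 1) = cvec (Suc k) j" if "j \<le> k+2" for j
    using that by (auto simp: cvec_def)
  have p: "(pvec k)(k+2 := 1) = pvec (Suc k)" by (auto simp: pvec_def cvec_def)
  have q: "(qvec k)(k+2 := 1) = qvec (Suc k)" by (auto simp: qvec_def cvec_def)
  show ?thesis using assms c p q unfolding Wv_def by force
qed

lemma zero_Wv: "(\<lambda>_. 0) \<in> Wv (Suc k)"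
proof -
  have "cvec (Suc k) (k+3) = (\<lambda>_. 0)" by (auto simp: cvec_def)
  then show ?thesis unfolding Wv_def by (metis UnI1 atLeastAtMost_iff image_eqI le_add2 add_Suc_right numeral_3_eq_3 le_refl Suc_eq_plus1 add_2_eq_Suc' numeral_2_eq_2 le_add_same_cancel2 zero_le)
qed

lemma W0: "Wv 0 = {\<lambda>_. 0, (\<lambda>i. if i = 0 then 2 else 0), (\<lambda>i. if i = 1 then 2 else 0)}"
proof -
  have c: "cvec 0 2 = (\<lambda>_. 0)" by (auto simp: cvec_def)
  have "{2..0+2::nat} = {2}" by simp
  then have "Wv 0 = cvec 0 ` {2} \<union> {pvec 0, qvec 0}" by (simp only: Wv_def)
  then have "Wv 0 = {cvec 0 2, pvec 0, qvec 0}" by auto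
  moreover have "pvec 0 = (\<lambda>i. if i = 0 then 2 else 0)" by (auto simp: pvec_def cvec_def)
  moreover have "qvec 0 = (\<lambda>i. if i = 1 then 2 else 0)" by (auto simp: qvec_def cvec_def)
  ultimately show ?thesis using c by simp
qed

lemma Lf_upd: "Lf (Suc n) c (z(n := a)) = Lf n c z + c n * a"
  unfolding Lf_def by (simp add: lessThan_Suc)

lemma pyr_bound:
  assumes "\<forall>w\<in>Wv k. \<beta> \<le> Lf (k+2) c w" "y \<in> iter_pyramid k"
  shows "\<beta> \<le> Lf (k+2) c y"
  using assms
proof (induction k arbitrary: \<beta> y)
  case 0
  have "\<forall>v\<in>Wv 0. \<beta> \<le> Lf 2 c v" using 0(1) by (metis add_0)
  moreover have "y \<in> fconv (Wv 0)" using 0 by (simp add: W0 two_Delta2_def)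
  ultimately have "\<beta> \<le> Lf 2 c y" using fconv_bound by blast
  then show ?case by (metis add_0)
next
  case (Suc k)
  let ?g = "\<lambda>x::nat\<Rightarrow>real. x(k+2 := 1)"
  have y: "y \<in> fconv (?g ` iter_pyramid k \<union> {\<lambda>_. 0})"
    using Suc.prems(2) by (simp add: lattice_pyramid_def)
  have IH: "\<beta> - c (k+2) \<le> Lf (k+2) c z" if "z \<in> iter_pyramid k" for z
  proof (rule Suc.IH[OF _ that], intro ballI)
    fix w assume "w \<in> Wv k"
    then have "\<beta> \<le> Lf (Suc k + 2) c (w(k+2 := 1))" using Suc.prems(1) Wv_lift by blast
    also have "\<dots> = Lf (k+2) c w + c (k+2)" using Lf_upd[of "k+2" c w 1] by simp
    finally show "\<beta> - c (k+2) \<le> Lf (k+2) c w" by simp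
  qed
  show ?case
  proof (rule fconv_bound[OF _ y], intro ballI)
    fix v assume "v \<in> ?g ` iter_pyramid k \<union> {\<lambda>_. 0}"
    then consider z where "z \<in> iter_pyramid k" "v = ?g z" | "v = (\<lambda>_. 0)" by blast
    then show "\<beta> \<le> Lf (Suc k + 2) c v"
    proof cases
      case 1
      have "Lf (Suc k + 2) c v = Lf (k+2) c z + c (k+2)" using Lf_upd[of "k+2" c z 1] 1 by simp
      then show ?thesis using IH[OF 1(1)] by simp
    next
      case 2
      have "\<beta> \<le> Lf (Suc k + 2) c (\<lambda>_. 0)" using Suc.prems(1) zero_Wv[of k] by blast
      then show ?thesis using 2 by (simp add: Lf_def)
    qed
  qed
qed

lemma Wv_sub: "Wv k \<subseteq> iter_pyramid k"
proof (induction k)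
  case 0
  then show ?case by (auto simp: W0 two_Delta2_def intro: in_fconv)
next
  case (Suc k)
  show ?case
  proof
    fix w assume w: "w \<in> Wv (Suc k)"
    have gen: "w \<in> (\<lambda>x. x(k+2 := 1)) ` iter_pyramid k \<union> {\<lambda>_. 0}"
    proof -
      have "w = (\<lambda>_. 0) \<or> (\<exists>w'\<in>Wv k. w = w'(k+2 := 1))"
      proof -
        from w consider j where "2 \<le> j" "j \<le> k+3" "w = cvec (Suc k) j" | "w = pvec (Suc k)" | "w = qvec (Suc k)"
          unfolding Wv_def by force
        then show ?thesis
        proof cases
          case 1
          show ?thesis
          proof (cases "j = k+3")
            case True then show ?thesis using 1 by (auto simp: cvec_def)
          next
            case False
            then have "w = (cvec k j)(k+2 := 1)" "cvec k j \<in> Wv k" using 1 by (auto simp: cvec_def Wv_def)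
            then show ?thesis by blast
          qed
        next
          case 2
          then have "w = (pvec k)(k+2 := 1)" by (auto simp: pvec_def cvec_def)
          then show ?thesis unfolding Wv_def by blast
        next
          case 3
          then have "w = (qvec k)(k+2 := 1)" by (auto simp: qvec_def cvec_def)
          then show ?thesis unfolding Wv_def by blast
        qed
      qed
      then show ?thesis using Suc.IH by blast
    qed
    show "w \<in> iter_pyramid (Suc k)"
      using in_fconv[OF gen] by (simp add: lattice_pyramid_def)
  qed
qed

definition ee :: "nat \<Rightarrow> nat \<Rightarrow> int" where "ee m = (\<lambda>i. if i = m then 1 else 0)"

lemma pair_add: "pair d (\<lambda>i. a i + b i) y = pair d a y + pair d b y"
  unfolding pair_def by (simp add: sum.distrib distrib_right)
lemma pair_diff: "pair d (\<lambda>i. a i - b i) y = pair d a y - pair d b y"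
  unfolding pair_def by (simp add: sum_subtractf left_diff_distrib)
lemma pair_smult: "pair d (\<lambda>i. c * a i) y = of_int c * pair d a y"
  unfolding pair_def by (simp add: sum_distrib_left mult_ac)
lemma pair_uminus: "pair d (\<lambda>i. - a i) y = - pair d a y"
  unfolding pair_def by (simp add: sum_negf)
lemma pair_ee: "m < d \<Longrightarrow> pair d (ee m) y = y m"
proof -
  assume "m < d"
  have "(\<Sum>i<d. real_of_int (ee m i) * y i) = (\<Sum>i<d. if i = m then y i else 0)"
    by (rule sum.cong) (auto simp: ee_def)
  also have "\<dots> = y m" using \<open>m < d\<close> by (simp add: sum.delta)
  finally show ?thesis unfolding pair_def .
qed

lemma pair_Lf: "pair d a y = Lf d (\<lambda>i. real_of_int (a i)) y"
  unfolding pair_def Lf_def by simp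

lemma Q_bound:
  assumes "\<forall>w\<in>Wv k. \<beta> \<le> pair (k+2) b w" "y \<in> iter_pyramid k"
  shows "\<beta> \<le> pair (k+2) b y"
  using pyr_bound[of k \<beta> "\<lambda>i. real_of_int (b i)" y] assms by (simp add: pair_Lf)

lemma Wv_cases:
  assumes "w \<in> Wv k"
  obtains j where "2 \<le> j" "j \<le> k+2" "w = cvec k j" | "w = pvec k" | "w = qvec k"
  using assms unfolding Wv_def by force

lemma Q_y0: "y \<in> iter_pyramid k \<Longrightarrow> 0 \<le> pair (k+2) (ee 0) y"
  by (rule Q_bound) (auto elim!: Wv_cases simp: pair_ee cvec_def pvec_def qvec_def)
lemma Q_y1: "y \<in> iter_pyramid k \<Longrightarrow> 0 \<le> pair (k+2) (ee 1) y"
  by (rule Q_bound) (auto elim!: Wv_cases simp: pair_ee cvec_def pvec_def qvec_def)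
lemma Q_y2: "y \<in> iter_pyramid k \<Longrightarrow> 1 \<le> k \<Longrightarrow>
   0 \<le> pair (k+2) (\<lambda>i. 2 * ee 2 i - ee 0 i - ee 1 i) y"
  by (rule Q_bound) (auto elim!: Wv_cases simp: pair_ee pair_diff pair_smult cvec_def pvec_def qvec_def)
lemma Q_yj: "y \<in> iter_pyramid k \<Longrightarrow> 2 \<le> j \<Longrightarrow> j \<le> k \<Longrightarrow>
   0 \<le> pair (k+2) (\<lambda>i. ee (Suc j) i - ee j i) y"
  by (rule Q_bound) (auto elim!: Wv_cases simp: pair_ee pair_diff cvec_def pvec_def qvec_def)
lemma Q_ylast: "y \<in> iter_pyramid k \<Longrightarrow> 1 \<le> k \<Longrightarrow>
   -1 \<le> pair (k+2) (\<lambda>i. - ee (k+1) i) y"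
  by (rule Q_bound) (auto elim!: Wv_cases simp: pair_ee pair_uminus cvec_def pvec_def qvec_def)
lemma Q_d2: "y \<in> iter_pyramid 0 \<Longrightarrow>
   -2 \<le> pair 2 (\<lambda>i. - ee 0 i - ee 1 i) y"
proof -
  assume y: "y \<in> iter_pyramid 0"
  have "\<forall>w\<in>Wv 0. -2 \<le> pair (0+2) (\<lambda>i. - ee 0 i - ee 1 i) w"
    by (auto elim!: Wv_cases simp: pair_ee pair_uminus pair_diff cvec_def pvec_def qvec_def)
  from Q_bound[OF this y] show ?thesis by (simp add: numeral_2_eq_2)
qed

lemma comb:
  fixes v :: "nat \<Rightarrow> int" and b0 b1 :: int and d :: nat
  assumes d: "2 \<le> d"
    and nz: "\<not> (b0 = 0 \<and> b1 = 0 \<and> (\<forall>j. 2 \<le> j \<and> j < d \<longrightarrow> v j = v (Suc j)))"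
  shows "\<exists>x \<in> {2*b0 + v 2, 2*b1 + v 2} \<union> v ` {2..d}.
     (2 * int d - 1) * x \<le> (2*b0 + v 2) + (2*b1 + v 2) + v 2 + 2 * (\<Sum>j\<in>{3..d}. v j) - 2"
proof -
  define A where "A = {2*b0 + v 2, 2*b1 + v 2} \<union> v ` {2..d}"
  have fin: "finite A" and ne: "A \<noteq> {}" by (auto simp: A_def)
  define m where "m = Min A"
  have mA: "m \<in> A" using fin ne Min_in m_def by blast
  have mle: "\<forall>x\<in>A. m \<le> x" using fin m_def by simp
  have P: "m \<le> 2*b0 + v 2" and Q: "m \<le> 2*b1 + v 2" and V: "\<forall>j\<in>{2..d}. m \<le> v j"
    using mle unfolding A_def by auto
  have V2: "m \<le> v 2" using V d by auto
  have card: "card {3..d} = d - 2" by simp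
  have sumeq: "(\<Sum>j\<in>{3..d}. v j - m) = (\<Sum>j\<in>{3..d}. v j) - int (d-2) * m"
    by (simp add: sum_subtractf card)
  have key: "(2*b0 + v 2) + (2*b1 + v 2) + v 2 + 2 * (\<Sum>j\<in>{3..d}. v j) - (2 * int d - 1) * m
      = (2*b0 + v 2 - m) + (2*b1 + v 2 - m) + (v 2 - m) + 2 * (\<Sum>j\<in>{3..d}. v j - m)"
    using sumeq d by (simp add: of_nat_diff algebra_simps)
  have nonneg: "0 \<le> (\<Sum>j\<in>{3..d}. v j - m)" using V by (intro sum_nonneg) auto
  show ?thesis
  proof (cases "\<exists>j\<in>{3..d}. v j \<noteq> m")
    case True
    then obtain j where j: "j \<in> {3..d}" "v j \<noteq> m" by blast
    have "v j - m \<le> (\<Sum>j\<in>{3..d}. v j - m)" using V j by (intro member_le_sum) auto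
    moreover have "m \<le> v j" using V j by auto
    ultimately have "1 \<le> (\<Sum>j\<in>{3..d}. v j - m)" using j by linarith
    then have "(2 * int d - 1) * m \<le> (2*b0 + v 2) + (2*b1 + v 2) + v 2 + 2 * (\<Sum>j\<in>{3..d}. v j) - 2"
      using key P Q V2 by linarith
    with mA show ?thesis unfolding A_def by blast
  next
    case False
    show ?thesis
    proof (cases "2 \<le> (2*b0 + v 2 - m) + (2*b1 + v 2 - m) + (v 2 - m)")
      case True
      then have "(2 * int d - 1) * m \<le> (2*b0 + v 2) + (2*b1 + v 2) + v 2 + 2 * (\<Sum>j\<in>{3..d}. v j) - 2"
        using key nonneg by linarith
      with mA show ?thesis unfolding A_def by blast
    next
      case False2: False
      define x where "x = v 2 - m"
      have "0 \<le> 2*b0 + x" "0 \<le> 2*b1 + x" "0 \<le> x" "2*b0 + 2*b1 + 3*x \<le> 1"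
        using P Q V2 False2 unfolding x_def by presburger+
      then have "b0 = 0 \<and> b1 = 0 \<and> x = 0" by presburger
      then have b: "b0 = 0" "b1 = 0" "v 2 = m" unfolding x_def by auto
      have "\<forall>j. 2 \<le> j \<and> j < d \<longrightarrow> v j = v (Suc j)"
      proof (intro allI impI)
        fix j assume j: "2 \<le> j \<and> j < d"
        show "v j = v (Suc j)"
        proof (cases "j = 2")
          case True
          then show ?thesis using False b(3) j by auto
        next
          case False3: False
          then show ?thesis using False j by auto
        qed
      qed
      with b nz show ?thesis by blast
    qed
  qed
qed

lemma pairy_add: "pair d b (\<lambda>i. y i + z i) = pair d b y + pair d b z"
  unfolding pair_def by (simp add: sum.distrib distrib_left)
lemma pairy_smult: "pair d b (\<lambda>i. c * y i) = c * pair d b y"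
  unfolding pair_def by (simp add: sum_distrib_left mult_ac)
lemma pairy_sum: "pair d b (\<lambda>i. \<Sum>j\<in>J. f j i) = (\<Sum>j\<in>J. pair d b (f j))"
  unfolding pair_def by (simp add: sum_distrib_left sum.swap[of _ J])
lemma pairy_ee: "m < d \<Longrightarrow> pair d b (\<lambda>i. real_of_int (ee m i)) = real_of_int (b m)"
proof -
  assume "m < d"
  have "(\<Sum>i<d. real_of_int (b i) * real_of_int (ee m i)) = (\<Sum>i<d. if i = m then real_of_int (b i) else 0)"
    by (rule sum.cong) (auto simp: ee_def)
  also have "\<dots> = real_of_int (b m)" using \<open>m < d\<close> by (simp add: sum.delta)
  finally show ?thesis unfolding pair_def .
qed

definition vv :: "nat \<Rightarrow> (nat \<Rightarrow> int) \<Rightarrow> nat \<Rightarrow> int" where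
  "vv d b j = (\<Sum>i<d. if j \<le> i then b i else 0)"

lemma pair_cvec: "pair (k+2) b (cvec k j) = real_of_int (vv (k+2) b j)"
proof -
  have "pair (k+2) b (cvec k j) = (\<Sum>i<k+2. real_of_int (b i) * (if j \<le> i \<and> i < k+2 then 1 else 0))"
    by (simp add: pair_def cvec_def)
  also have "\<dots> = (\<Sum>i<k+2. real_of_int (if j \<le> i then b i else 0))" by (rule sum.cong) auto
  also have "\<dots> = real_of_int (vv (k+2) b j)" unfolding vv_def by (simp only: of_int_sum)
  finally show ?thesis .
qed

lemma vv_diff: "j < d \<Longrightarrow> vv d b j - vv d b (Suc j) = b j"
proof -
  assume "j < d"
  have "vv d b j - vv d b (Suc j) = (\<Sum>i<d. (if j \<le> i then b i else 0) - (if Suc j \<le> i then b i else 0))"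
    unfolding vv_def by (simp add: sum_subtractf)
  also have "\<dots> = (\<Sum>i<d. if i = j then b i else 0)" by (rule sum.cong) auto
  also have "\<dots> = b j" using \<open>j < d\<close> by (simp add: sum.delta)
  finally show ?thesis .
qed

lemma pvec_eq: "pvec k = (\<lambda>i. 2 * real_of_int (ee 0 i) + cvec k 2 i)"
  by (auto simp: pvec_def ee_def cvec_def)
lemma qvec_eq: "qvec k = (\<lambda>i. 2 * real_of_int (ee 1 i) + cvec k 2 i)"
  by (auto simp: qvec_def ee_def cvec_def)

lemma pair_pvec: "pair (k+2) b (pvec k) = real_of_int (2 * b 0 + vv (k+2) b 2)"
proof -
  have "pair (k+2) b (pvec k) = 2 * pair (k+2) b (\<lambda>i. real_of_int (ee 0 i)) + pair (k+2) b (cvec k 2)"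
    unfolding pvec_eq by (simp only: pairy_add pairy_smult)
  also have "\<dots> = 2 * real_of_int (b 0) + real_of_int (vv (k+2) b 2)"
    using pairy_ee[of 0 "k+2" b] pair_cvec[of k b 2] by simp
  finally show ?thesis by simp
qed
lemma pair_qvec: "pair (k+2) b (qvec k) = real_of_int (2 * b 1 + vv (k+2) b 2)"
proof -
  have "pair (k+2) b (qvec k) = 2 * pair (k+2) b (\<lambda>i. real_of_int (ee 1 i)) + pair (k+2) b (cvec k 2)"
    unfolding qvec_eq by (simp only: pairy_add pairy_smult)
  also have "\<dots> = 2 * real_of_int (b 1) + real_of_int (vv (k+2) b 2)"
    using pairy_ee[of 1 "k+2" b] pair_cvec[of k b 2] by simp
  finally show ?thesis by simp
qed

definition y0 :: "nat \<Rightarrow> nat \<Rightarrow> real" where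
  "y0 k = (\<lambda>i. (1 / (2 * real (k+2) - 1)) *
      (pvec k i + qvec k i + cvec k 2 i + 2 * (\<Sum>j\<in>{3..k+2}. cvec k j i)))"

lemma inRd_y0: "inRd (k+2) (y0 k)"
  unfolding inRd_def y0_def pvec_def qvec_def cvec_def by auto

lemma pair_y0: "pair (k+2) b (y0 k) = (1 / (2 * real (k+2) - 1)) *
   real_of_int ((2 * b 0 + vv (k+2) b 2) + (2 * b 1 + vv (k+2) b 2) + vv (k+2) b 2
      + 2 * (\<Sum>j\<in>{3..k+2}. vv (k+2) b j))"
proof -
  have "pair (k+2) b (y0 k) = (1 / (2 * real (k+2) - 1)) *
     (pair (k+2) b (pvec k) + pair (k+2) b (qvec k) + pair (k+2) b (cvec k 2)
      + 2 * (\<Sum>j\<in>{3..k+2}. pair (k+2) b (cvec k j)))"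
    unfolding y0_def by (simp only: pairy_add pairy_smult pairy_sum)
  also have "\<dots> = (1 / (2 * real (k+2) - 1)) *
   real_of_int ((2 * b 0 + vv (k+2) b 2) + (2 * b 1 + vv (k+2) b 2) + vv (k+2) b 2
      + 2 * (\<Sum>j\<in>{3..k+2}. vv (k+2) b j))"
    by (simp only: pair_pvec pair_qvec pair_cvec of_int_add of_int_mult of_int_sum of_int_numeral)
  finally show ?thesis .
qed

lemma dir2_vertex:
  assumes nz: "\<exists>i<k+2. b i \<noteq> 0"
  shows "\<exists>w\<in>Wv k. pair (k+2) b w \<le> pair (k+2) b (y0 k) - 2 / (2 * real (k+2) - 1)"
proof -
  define d where "d = k+2"
  define v where "v = vv d b"
  have nz': "\<not> (b 0 = 0 \<and> b 1 = 0 \<and> (\<forall>j. 2 \<le> j \<and> j < d \<longrightarrow> v j = v (Suc j)))"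
  proof
    assume h: "b 0 = 0 \<and> b 1 = 0 \<and> (\<forall>j. 2 \<le> j \<and> j < d \<longrightarrow> v j = v (Suc j))"
    have "\<forall>i<d. b i = 0"
    proof (intro allI impI)
      fix i assume i: "i < d"
      show "b i = 0"
      proof (cases "i < 2")
        case True
        then have "i = 0 \<or> i = 1" by linarith
        then show ?thesis using h by blast
      next
        case False
        then have "v i = v (Suc i)" using h i by simp
        moreover have "v i - v (Suc i) = b i" unfolding v_def by (rule vv_diff[OF i])
        ultimately show ?thesis by simp
      qed
    qed
    with nz show False unfolding d_def by blast
  qed
  have d2: "2 \<le> d" unfolding d_def by simp
  obtain x where x: "x \<in> {2*b 0 + v 2, 2*b 1 + v 2} \<union> v ` {2..d}"
    and xle: "(2 * int d - 1) * x \<le> (2*b 0 + v 2) + (2*b 1 + v 2) + v 2 + 2 * (\<Sum>j\<in>{3..d}. v j) - 2"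
    using comb[OF d2 nz'] by blast
  have wx: "\<exists>w\<in>Wv k. pair d b w = real_of_int x"
  proof -
    from x consider "x = 2*b 0 + v 2" | "x = 2*b 1 + v 2" | j where "j \<in> {2..d}" "x = v j" by blast
    then show ?thesis
    proof cases
      case 1
      have "pvec k \<in> Wv k" unfolding Wv_def by blast
      moreover have "pair d b (pvec k) = real_of_int x" unfolding 1 d_def v_def by (rule pair_pvec)
      ultimately show ?thesis by blast
    next
      case 2
      have "qvec k \<in> Wv k" unfolding Wv_def by blast
      moreover have "pair d b (qvec k) = real_of_int x" unfolding 2 d_def v_def by (rule pair_qvec)
      ultimately show ?thesis by blast
    next
      case 3
      have "cvec k j \<in> Wv k" using 3(1) unfolding Wv_def d_def by blast
      moreover have "pair d b (cvec k j) = real_of_int x" unfolding 3(2) d_def v_def by (rule pair_cvec)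
      ultimately show ?thesis by blast
    qed
  qed
  define S where "S = (2*b 0 + v 2) + (2*b 1 + v 2) + v 2 + 2 * (\<Sum>j\<in>{3..d}. v j)"
  define c where "c = 2 * real d - 1"
  have pos: "0 < c" unfolding c_def d_def by simp
  have "real_of_int ((2 * int d - 1) * x) \<le> real_of_int (S - 2)"
    using xle unfolding S_def by (simp only: of_int_le_iff)
  then have xleR: "c * real_of_int x \<le> real_of_int S - 2"
    unfolding c_def by simp
  have "real_of_int x \<le> (real_of_int S - 2) / c"
    using xleR pos by (simp only: pos_le_divide_eq mult.commute)
  also have "\<dots> = (1 / c) * real_of_int S - 2 / c"
    by (simp add: diff_divide_distrib)
  finally have xr: "real_of_int x \<le> (1 / c) * real_of_int S - 2 / c" .
  obtain w where w: "w \<in> Wv k" "pair d b w = real_of_int x" using wx by blast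
  have py: "pair d b (y0 k) = (1 / c) * real_of_int S"
    unfolding S_def c_def d_def v_def by (rule pair_y0)
  have "pair d b w \<le> pair d b (y0 k) - 2 / c"
    using w(2) xr py by linarith
  then show ?thesis using w(1) unfolding d_def c_def by blast
qed

definition UT :: "nat \<Rightarrow> (nat \<Rightarrow> nat \<Rightarrow> int) \<Rightarrow> (nat \<Rightarrow> int) \<Rightarrow> nat \<Rightarrow> int" where
  "UT d U b = (\<lambda>j. if j < d then \<Sum>i<d. b i * U i j else 0)"

lemma UT_app: "j < d \<Longrightarrow> UT d U b j = (\<Sum>i<d. b i * U i j)" by (simp add: UT_def)

lemma pair_map: "pair d b (unimod_map d U t x) = pair d (UT d U b) x + real_of_int (\<Sum>i<d. b i * t i)"
proof -
  have "pair d b (unimod_map d U t x) = (\<Sum>i<d. real_of_int (b i) * ((\<Sum>j<d. real_of_int (U i j) * x j) + real_of_int (t i)))"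
    unfolding pair_def unimod_map_def by (rule sum.cong) auto
  also have "\<dots> = (\<Sum>i<d. \<Sum>j<d. real_of_int (b i) * real_of_int (U i j) * x j) + (\<Sum>i<d. real_of_int (b i) * real_of_int (t i))"
    by (simp add: distrib_left sum.distrib sum_distrib_left mult.assoc)
  also have "(\<Sum>i<d. \<Sum>j<d. real_of_int (b i) * real_of_int (U i j) * x j) = (\<Sum>j<d. \<Sum>i<d. real_of_int (b i) * real_of_int (U i j) * x j)"
    by (rule sum.swap)
  also have "\<dots> = (\<Sum>j<d. real_of_int (\<Sum>i<d. b i * U i j) * x j)"
    by (simp add: sum_distrib_right)
  also have "\<dots> = pair d (UT d U b) x" unfolding pair_def UT_def by (rule sum.cong) auto
  finally show ?thesis by simp
qed

lemma UT_nonzero: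
  assumes UV: "\<forall>i<d. \<forall>k<d. (\<Sum>j<d. U i j * V j k) = (if i = k then 1 else 0)"
    and nz: "\<exists>i<d. b i \<noteq> 0"
  shows "\<exists>j<d. UT d U b j \<noteq> 0"
proof (rule ccontr)
  assume "\<not> ?thesis"
  then have z: "\<forall>j<d. (\<Sum>i<d. b i * U i j) = 0" by (auto simp: UT_def)
  have "\<forall>k<d. b k = 0"
  proof (intro allI impI)
    fix k assume k: "k < d"
    have "b k = (\<Sum>i<d. if i = k then b i else 0)" using k by (simp add: sum.delta)
    also have "\<dots> = (\<Sum>i<d. b i * (\<Sum>j<d. U i j * V j k))"
      by (rule sum.cong) (use UV k in auto)
    also have "\<dots> = (\<Sum>i<d. \<Sum>j<d. b i * U i j * V j k)" by (simp add: sum_distrib_left mult.assoc)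
    also have "\<dots> = (\<Sum>j<d. \<Sum>i<d. b i * U i j * V j k)" by (rule sum.swap)
    also have "\<dots> = (\<Sum>j<d. (\<Sum>i<d. b i * U i j) * V j k)" by (simp add: sum_distrib_right)
    also have "\<dots> = 0" using z by simp
    finally show "b k = 0" .
  qed
  with nz show False by auto
qed

lemma UT_VT:
  assumes VU: "\<forall>i<d. \<forall>k<d. (\<Sum>j<d. V i j * U j k) = (if i = k then 1 else 0)"
    and a: "inZd d a"
  shows "UT d U (UT d V a) = a"
proof
  fix j show "UT d U (UT d V a) j = a j"
  proof (cases "j < d")
    case False then show ?thesis using a by (simp add: UT_def inZd_def)
  next
    case True
    have "UT d U (UT d V a) j = (\<Sum>i<d. UT d V a i * U i j)" using True by (rule UT_app)
    also have "\<dots> = (\<Sum>i<d. (\<Sum>k<d. a k * V k i) * U i j)"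
      by (rule sum.cong) (auto simp: UT_app)
    also have "\<dots> = (\<Sum>i<d. \<Sum>k<d. a k * V k i * U i j)" by (simp add: sum_distrib_right)
    also have "\<dots> = (\<Sum>k<d. \<Sum>i<d. a k * V k i * U i j)" by (rule sum.swap)
    also have "\<dots> = (\<Sum>k<d. a k * (\<Sum>i<d. V k i * U i j))" by (simp add: sum_distrib_left mult.assoc)
    also have "\<dots> = (\<Sum>k<d. if k = j then a k else 0)"
      by (rule sum.cong) (use VU True in auto)
    also have "\<dots> = a j" using True by (simp add: sum.delta)
    finally show ?thesis .
  qed
qed

lemma t1:
  assumes UV: "\<forall>i<d. \<forall>k<d. (\<Sum>j<d. U i j * V j k) = (if i = k then 1 else 0)"
    and Q: "Q = unimod_map d U t ` P" and Pne: "P \<noteq> {}"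
    and x: "x \<in> fine_adjoint d P s" and b: "inZd d b" "\<exists>i<d. b i \<noteq> 0"
    and bound: "\<forall>y\<in>Q. \<beta> \<le> pair d b y"
  shows "\<beta> + s \<le> pair d b (unimod_map d U t x)"
proof -
  let ?a = "UT d U b"
  let ?c = "real_of_int (\<Sum>i<d. b i * t i)"
  have aZ: "inZd d ?a" by (simp add: inZd_def UT_def)
  have anz: "\<exists>j<d. ?a j \<noteq> 0" by (rule UT_nonzero[OF UV b(2)])
  have xa: "pair d ?a x \<ge> hP d P ?a + s" using x aZ anz unfolding fine_adjoint_def by blast
  have "hP d P ?a \<ge> \<beta> - ?c"
    unfolding hP_def
  proof (rule cInf_greatest)
    show "(\<lambda>x. pair d ?a x) ` P \<noteq> {}" using Pne by simp
  next
    fix r assume "r \<in> (\<lambda>x. pair d ?a x) ` P"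
    then obtain x' where x': "x' \<in> P" "r = pair d ?a x'" by blast
    have "\<beta> \<le> pair d b (unimod_map d U t x')" using bound Q x' by blast
    then show "\<beta> - ?c \<le> r" using x' pair_map[of d b U t x'] by simp
  qed
  then show ?thesis using xa pair_map[of d b U t x] by simp
qed

lemma t2:
  assumes VU: "\<forall>i<d. \<forall>k<d. (\<Sum>j<d. V i j * U j k) = (if i = k then 1 else 0)"
    and Q: "Q = unimod_map d U t ` P"
    and H: "\<forall>b. inZd d b \<and> (\<exists>i<d. b i \<noteq> 0) \<longrightarrow>
        (\<exists>w\<in>Q. pair d b w \<le> pair d b y - s) \<and> (\<exists>\<beta>. \<forall>w\<in>Q. \<beta> \<le> pair d b w)"
  shows "unimod_map d V (\<lambda>i. - (\<Sum>j<d. V i j * t j)) y \<in> fine_adjoint d P s"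
proof -
  let ?t' = "\<lambda>i. - (\<Sum>j<d. V i j * t j)"
  let ?x = "unimod_map d V ?t' y"
  have inR: "inRd d ?x" by (simp add: inRd_def unimod_map_def)
  have "pair d a ?x \<ge> hP d P a + s" if a: "inZd d a" "\<exists>i<d. a i \<noteq> 0" for a
  proof -
    let ?b = "UT d V a"
    have bZ: "inZd d ?b" by (simp add: inZd_def UT_def)
    have ab: "UT d U ?b = a" by (rule UT_VT[OF VU a(1)])
    have bnz: "\<exists>i<d. ?b i \<noteq> 0"
    proof (rule ccontr)
      assume "\<not> ?thesis"
      then have "\<forall>j. UT d U ?b j = 0" unfolding UT_def by auto
      then show False using ab a(2) by auto
    qed
    let ?c = "real_of_int (\<Sum>i<d. ?b i * t i)"
    have pa: "pair d a x' = pair d ?b (unimod_map d U t x') - ?c" for x'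
      using pair_map[of d ?b U t x'] ab by simp
    have sumid: "(\<Sum>i<d. a i * ?t' i) = - (\<Sum>i<d. ?b i * t i)"
    proof -
      have "(\<Sum>i<d. ?b i * t i) = (\<Sum>i<d. (\<Sum>k<d. a k * V k i) * t i)"
        by (rule sum.cong) (auto simp: UT_def)
      also have "\<dots> = (\<Sum>i<d. \<Sum>k<d. a k * V k i * t i)" by (simp add: sum_distrib_right)
      also have "\<dots> = (\<Sum>k<d. \<Sum>i<d. a k * V k i * t i)" by (rule sum.swap)
      also have "\<dots> = (\<Sum>k<d. a k * (\<Sum>i<d. V k i * t i))" by (simp add: sum_distrib_left mult.assoc)
      finally show ?thesis by (simp add: sum_negf)
    qed
    have "pair d a ?x = pair d ?b y + real_of_int (\<Sum>i<d. a i * ?t' i)" by (rule pair_map)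
    also have "\<dots> = pair d ?b y - ?c" by (simp only: sumid of_int_minus diff_conv_add_uminus)
    finally have px: "pair d a ?x = pair d ?b y - ?c" .
    obtain w where w: "w \<in> Q" "pair d ?b w \<le> pair d ?b y - s" using H bZ bnz by blast
    obtain \<beta> where \<beta>: "\<forall>w\<in>Q. \<beta> \<le> pair d ?b w" using H bZ bnz by blast
    obtain xw where xw: "xw \<in> P" "w = unimod_map d U t xw" using w(1) Q by blast
    have "hP d P a \<le> pair d a xw"
      unfolding hP_def
    proof (rule cInf_lower)
      show "pair d a xw \<in> (\<lambda>x. pair d a x) ` P" using xw by blast
      show "bdd_below ((\<lambda>x. pair d a x) ` P)"
      proof (rule bdd_belowI[of _ "\<beta> - ?c"])
        fix r assume "r \<in> (\<lambda>x. pair d a x) ` P"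
        then obtain x' where "x' \<in> P" "r = pair d a x'" by blast
        then show "\<beta> - ?c \<le> r" using \<beta> Q pa[of x'] by auto
      qed
    qed
    then show ?thesis using pa[of xw] xw w px by simp
  qed
  then show ?thesis using inR unfolding fine_adjoint_def by blast
qed

lemma inZd_ee: "m < d \<Longrightarrow> inZd d (ee m)" by (simp add: inZd_def ee_def)

lemma main_k:
  assumes ex: "exceptional_simplex (k+2) P"
  shows "fine_codegree (k+2) P = real (k+2) - 1 / 2"
proof -
  let ?d = "k+2"
  from ex obtain U V t where UV: "\<forall>i<?d. \<forall>k<?d. (\<Sum>j<?d. U i j * V j k) = (if i = k then 1 else 0)"
    and Qeq0: "iter_pyramid k = unimod_map ?d U t ` P"
    unfolding exceptional_simplex_def unimod_equiv_def by auto
  have VU: "\<forall>i<?d. \<forall>k<?d. (\<Sum>j<?d. V i j * U j k) = (if i = k then 1 else 0)"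
    by (rule VU_inv[OF UV])
  define Qs where "Qs = iter_pyramid k"
  have Qeq: "Qs = unimod_map ?d U t ` P" using Qeq0 Qs_def by simp
  have "pvec k \<in> Qs" using Wv_sub[of k] unfolding Qs_def Wv_def by blast
  then have Pne: "P \<noteq> {}" using Qeq by auto
  define s0 where "s0 = 2 / (2 * real ?d - 1)"
  have s0pos: "0 < s0" by (simp add: s0_def)
  have claim1: "s \<le> s0" if s: "0 < s" "fine_adjoint ?d P s \<noteq> {}" for s
  proof -
    obtain x where x: "x \<in> fine_adjoint ?d P s" using s(2) by blast
    define y where "y = unimod_map ?d U t x"
    have F: "\<beta> + s \<le> pair ?d b y" if "inZd ?d b" "\<exists>i<?d. b i \<noteq> 0" "\<forall>y\<in>Qs. \<beta> \<le> pair ?d b y" for b \<beta>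
      unfolding y_def by (rule t1[OF UV Qeq Pne x that])
    have y0: "s \<le> y 0"
      using F[of "ee 0" 0] Q_y0[of _ k] pair_ee[of 0 ?d] inZd_ee[of 0 ?d] unfolding Qs_def
      by (force simp: ee_def)
    have y1: "s \<le> y 1"
      using F[of "ee 1" 0] Q_y1[of _ k] pair_ee[of 1 ?d] inZd_ee[of 1 ?d] unfolding Qs_def
      by (force simp: ee_def)
    show "s \<le> s0"
    proof (cases "k = 0")
      case True
      have d2: "?d = 2" using True by simp
      have Z: "inZd ?d (\<lambda>i. - ee 0 i - ee 1 i)" by (simp add: inZd_def ee_def)
      have NZ: "\<exists>i<?d. - ee 0 i - ee 1 i \<noteq> 0" by (rule exI[of _ 0]) (simp add: ee_def)
      have QB: "\<forall>y\<in>Qs. -2 \<le> pair ?d (\<lambda>i. - ee 0 i - ee 1 i) y"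
      proof
        fix y' assume "y' \<in> Qs"
        then have "y' \<in> iter_pyramid 0" using True unfolding Qs_def by simp
        from Q_d2[OF this] show "-2 \<le> pair ?d (\<lambda>i. - ee 0 i - ee 1 i) y'" by (simp only: d2)
      qed
      have "-2 + s \<le> pair ?d (\<lambda>i. - ee 0 i - ee 1 i) y"
        using F[OF Z NZ QB] .
      then have "-2 + s \<le> - y 0 - y 1" by (simp add: pair_diff pair_uminus pair_ee)
      then have "3 * s \<le> 2" using y0 y1 by linarith
      then show ?thesis using True by (simp add: s0_def)
    next
      case False
      then have k1: "1 \<le> k" by simp
      have y2: "s \<le> 2 * y 2 - y 0 - y 1"
      proof -
        have Z: "inZd ?d (\<lambda>i. 2 * ee 2 i - ee 0 i - ee 1 i)" using k1 by (simp add: inZd_def ee_def)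
        have NZ: "\<exists>i<?d. 2 * ee 2 i - ee 0 i - ee 1 i \<noteq> 0" by (rule exI[of _ 0]) (simp add: ee_def)
        have "0 + s \<le> pair ?d (\<lambda>i. 2 * ee 2 i - ee 0 i - ee 1 i) y"
          using F[OF Z NZ] Q_y2[OF _ k1] unfolding Qs_def by blast
        then show ?thesis using k1 by (simp add: pair_diff pair_smult pair_ee)
      qed
      have yj: "s \<le> y (Suc j) - y j" if j: "2 \<le> j" "j \<le> k" for j
      proof -
        have Z: "inZd ?d (\<lambda>i. ee (Suc j) i - ee j i)" using j by (simp add: inZd_def ee_def)
        have NZ: "\<exists>i<?d. ee (Suc j) i - ee j i \<noteq> 0" by (rule exI[of _ j]) (use j in \<open>simp add: ee_def\<close>)
        have "0 + s \<le> pair ?d (\<lambda>i. ee (Suc j) i - ee j i) y"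
          using F[OF Z NZ] Q_yj[OF _ j] unfolding Qs_def by blast
        then show ?thesis using j by (simp add: pair_diff pair_ee)
      qed
      have ylast: "-1 + s \<le> - y (k+1)"
      proof -
        have Z: "inZd ?d (\<lambda>i. - ee (k+1) i)" by (simp add: inZd_def ee_def)
        have NZ: "\<exists>i<?d. - ee (k+1) i \<noteq> 0" by (rule exI[of _ "k+1"]) (simp add: ee_def)
        have "-1 + s \<le> pair ?d (\<lambda>i. - ee (k+1) i) y"
          using F[OF Z NZ] Q_ylast[OF _ k1] unfolding Qs_def by blast
        then show ?thesis by (simp add: pair_uminus pair_ee)
      qed
      have tele: "\<forall>m. 2 \<le> m \<and> m \<le> k + 1 \<longrightarrow> real (m - 2) * s \<le> y m - y 2"
      proof (intro allI)
        fix m show "2 \<le> m \<and> m \<le> k + 1 \<longrightarrow> real (m - 2) * s \<le> y m - y 2"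
        proof (induction m)
          case 0 then show ?case by simp
        next
          case (Suc m)
          show ?case
          proof
            assume h: "2 \<le> Suc m \<and> Suc m \<le> k + 1"
            show "real (Suc m - 2) * s \<le> y (Suc m) - y 2"
            proof (cases "m < 2")
              case True
              then have "Suc m = 2" using h by simp
              then show ?thesis by (simp add: numeral_2_eq_2)
            next
              case False
              then have "real (m - 2) * s \<le> y m - y 2" using Suc.IH h by simp
              moreover have "s \<le> y (Suc m) - y m" using yj[of m] False h by simp
              moreover have r: "real (Suc m - 2) = real (m - 2) + 1" using False by simp
              moreover have "real (Suc m - 2) * s = real (m - 2) * s + s"
                by (simp only: r distrib_right mult_1_left)
              ultimately show ?thesis by linarith
            qed
          qed
        qed
      qed
      moreover have h2: "2 \<le> k+1 \<and> k+1 \<le> k+1" using k1 by simp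
      ultimately have "real (k + 1 - 2) * s \<le> y (k+1) - y 2" by blast
      moreover have "k + 1 - 2 = k - 1" by simp
      ultimately have "real (k - 1) * s \<le> y (k+1) - y 2" by simp
      moreover have "real (k - 1) = real k - 1" using k1 by simp
      ultimately have A: "(real k - 1) * s \<le> y (k+1) - y 2" by simp
      have "(2 * real k + 3) * s \<le> 2" using A y0 y1 y2 ylast by (simp add: algebra_simps)
      then show ?thesis unfolding s0_def by (simp add: field_simps)
    qed
  qed
  have claim2: "fine_adjoint ?d P s0 \<noteq> {}"
  proof -
    have H: "\<forall>b. inZd ?d b \<and> (\<exists>i<?d. b i \<noteq> 0) \<longrightarrow>
        (\<exists>w\<in>Qs. pair ?d b w \<le> pair ?d b (y0 k) - s0) \<and> (\<exists>\<beta>. \<forall>w\<in>Qs. \<beta> \<le> pair ?d b w)"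
    proof (intro allI impI conjI)
      fix b assume b: "inZd ?d b \<and> (\<exists>i<?d. b i \<noteq> 0)"
      show "\<exists>w\<in>Qs. pair ?d b w \<le> pair ?d b (y0 k) - s0"
        using dir2_vertex[of k b] b Wv_sub[of k] unfolding Qs_def s0_def by blast
      show "\<exists>\<beta>. \<forall>w\<in>Qs. \<beta> \<le> pair ?d b w"
      proof (intro exI ballI)
        fix w assume "w \<in> Qs"
        then show "Min ((\<lambda>w. pair ?d b w) ` Wv k) \<le> pair ?d b w"
          unfolding Qs_def by (rule Q_bound[rotated]) (simp add: finite_Wv)
      qed
    qed
    show ?thesis using t2[OF VU Qeq H] by blast
  qed
  have sup: "Sup {s. s > 0 \<and> fine_adjoint ?d P s \<noteq> {}} = s0"
    by (rule cSup_eq_maximum) (use s0pos claim2 claim1 in auto)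
  show ?thesis unfolding fine_codegree_def sup s0_def by (simp add: field_simps)
qed

theorem mainTheorem9:
  fixes d :: nat and P :: "(nat \<Rightarrow> real) set"
  assumes "2 \<le> d"
    and "exceptional_simplex d P"
  shows "fine_codegree d P = real d - 1 / 2"
proof -
  obtain k where dk: "d = k + 2" using assms(1) by (metis le_add_diff_inverse2)
  show ?thesis using main_k[of k P] assms(2) unfolding dk by simp
qed

end
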